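(* There is an absolute constant $C$ such that for all integers $n,k,d\ge1$, the function $\textsc{Word}_{S_n,k}$ is computed by $S_n^{k-1}$-invariant $\Sigma_{d+1}$ and $\Pi_{d+1}$ formulas of size at most $n^{C\,d\,k^{1/d}}$. In particular, $\textsc{Word}_{S_n,k}$ has $S_n^{k-1}$-invariant $\mathsf{AC}$ formulas of size $n^{O(\log k)}$ and depth $O(\log k)$.
   Context: $\textsc{Word}_{S_n,k}:\overline{S_n}^k\subseteq\{0,1\}^{kn^2}\to\{0,1\}$ maps a $k$-tuple of $n\times n$ permutation matrices to the $(1,1)$-entry of their product; the variables are the entries $M_{i,a,b}$. $S_n^{k-1}$ acts on variables by $(g_1,\dots,g_{k-1})\cdot M_{i,a,b}=M_{i,g_{i-1}(a),g_i(b)}$ with $g_0=g_k=1$. $\mathsf{AC}$ formulas are rooted trees with unordered children. Leaves are labeled $0,1,x_i,\neg x_i$, and gates are unbounded fan-in $\textsc{and}$/$\textsc{or}$. $\Sigma_{d+1}$ (resp. $\Pi_{d+1}$) formulas are those of depth at most $d+1$ with output gate $\textsc{or}$ (resp. $\textsc{and}$). Size is the number of literal leaves. $P$-invariance means invariance of the labeled tree under relabeling literals by every $\pi\in P$. *)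

theory Defs
  imports Complex_Main "HOL-Library.Multiset" "HOL-Combinatorics.Permutations"
begin

text \<open>AC formulas: rooted trees with unordered children (multisets of subformulas).
  Leaves are constants 0/1 (Const) or literals x / not x (Lit True x / Lit False x).\<close>
datatype 'v acf =
    Const bool
  | Lit bool 'v
  | AND "'v acf multiset"
  | OR "'v acf multiset"

primrec eval :: "('v \<Rightarrow> bool) \<Rightarrow> 'v acf \<Rightarrow> bool" where
  "eval \<sigma> (Const b) = b"
| "eval \<sigma> (Lit p x) = (if p then \<sigma> x else \<not> \<sigma> x)"
| "eval \<sigma> (AND S) = (\<forall>b \<in># image_mset (eval \<sigma>) S. b)"
| "eval \<sigma> (OR S) = (\<exists>b \<in># image_mset (eval \<sigma>) S. b)"

primrec fsize :: "'v acf \<Rightarrow> nat" where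
  "fsize (Const b) = 0"
| "fsize (Lit p x) = 1"
| "fsize (AND S) = sum_mset (image_mset fsize S)"
| "fsize (OR S) = sum_mset (image_mset fsize S)"

primrec depth :: "'v acf \<Rightarrow> nat" where
  "depth (Const b) = 0"
| "depth (Lit p x) = 0"
| "depth (AND S) = Suc (Max (insert 0 (set_mset (image_mset depth S))))"
| "depth (OR S) = Suc (Max (insert 0 (set_mset (image_mset depth S))))"

definition is_Sigma :: "nat \<Rightarrow> 'v acf \<Rightarrow> bool" where
  "is_Sigma D F \<longleftrightarrow> depth F \<le> D \<and> (\<exists>S. F = OR S)"

definition is_Pi :: "nat \<Rightarrow> 'v acf \<Rightarrow> bool" where
  "is_Pi D F \<longleftrightarrow> depth F \<le> D \<and> (\<exists>S. F = AND S)"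

text \<open>Variables M_{i,a,b}, 1 \<le> i \<le> k, 1 \<le> a,b \<le> n, encoded as triples (i,a,b).\<close>
type_synonym var = "nat \<times> nat \<times> nat"

definition valid_vars :: "nat \<Rightarrow> nat \<Rightarrow> var set" where
  "valid_vars n k = {(i,a,b). 1 \<le> i \<and> i \<le> k \<and> 1 \<le> a \<and> a \<le> n \<and> 1 \<le> b \<and> b \<le> n}"

definition is_perm_matrix :: "nat \<Rightarrow> (nat \<Rightarrow> nat \<Rightarrow> bool) \<Rightarrow> bool" where
  "is_perm_matrix n P \<longleftrightarrow>
     (\<forall>a\<in>{1..n}. \<exists>!b. b \<in> {1..n} \<and> P a b) \<and> (\<forall>b\<in>{1..n}. \<exists>!a. a \<in> {1..n} \<and> P a b)"

definition in_domain :: "nat \<Rightarrow> nat \<Rightarrow> (var \<Rightarrow> bool) \<Rightarrow> bool" where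
  "in_domain n k M \<longleftrightarrow> (\<forall>i\<in>{1..k}. is_perm_matrix n (\<lambda>a b. M (i,a,b)))"

fun prodmat :: "nat \<Rightarrow> (var \<Rightarrow> bool) \<Rightarrow> nat \<Rightarrow> nat \<Rightarrow> nat \<Rightarrow> int" where
  "prodmat n M 0 a b = (if a = b then 1 else 0)"
| "prodmat n M (Suc j) a b = (\<Sum>c=1..n. prodmat n M j a c * (if M (Suc j, c, b) then 1 else 0))"

definition Word :: "nat \<Rightarrow> nat \<Rightarrow> (var \<Rightarrow> bool) \<Rightarrow> bool" where
  "Word n k M \<longleftrightarrow> prodmat n M k 1 1 = 1"

text \<open>Group S_n^{k-1}: tuples (g_1,...,g_{k-1}) of permutations of {1..n}; g_0 = g_k = 1.\<close>
definition group_elem :: "nat \<Rightarrow> nat \<Rightarrow> (nat \<Rightarrow> nat \<Rightarrow> nat) \<Rightarrow> bool" where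
  "group_elem n k g \<longleftrightarrow> (\<forall>j\<in>{1..<k}. g j permutes {1..n})"

definition gcomp :: "nat \<Rightarrow> (nat \<Rightarrow> nat \<Rightarrow> nat) \<Rightarrow> nat \<Rightarrow> nat \<Rightarrow> nat" where
  "gcomp k g j = (if j = 0 \<or> j = k then id else g j)"

definition act :: "nat \<Rightarrow> (nat \<Rightarrow> nat \<Rightarrow> nat) \<Rightarrow> var \<Rightarrow> var" where
  "act k g v = (case v of (i,a,b) \<Rightarrow> (i, gcomp k g (i - 1) a, gcomp k g i b))"

definition invariant :: "nat \<Rightarrow> nat \<Rightarrow> var acf \<Rightarrow> bool" where
  "invariant n k F \<longleftrightarrow> (\<forall>g. group_elem n k g \<longrightarrow> map_acf (act k g) F = F)"

definition computes_word :: "nat \<Rightarrow> nat \<Rightarrow> var acf \<Rightarrow> bool" where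
  "computes_word n k F \<longleftrightarrow> set_acf F \<subseteq> valid_vars n k \<and>
     (\<forall>M. in_domain n k M \<longrightarrow> (eval M F \<longleftrightarrow> Word n k M))"

end

theory Submission
  imports Defs
begin

definition andch :: "'v acf \<Rightarrow> 'v acf multiset" where
  "andch F = (case F of AND S \<Rightarrow> S | _ \<Rightarrow> {#F#})"
definition orch :: "'v acf \<Rightarrow> 'v acf multiset" where
  "orch F = (case F of OR S \<Rightarrow> S | _ \<Rightarrow> {#F#})"

lemma eval_andch: "eval M F \<longleftrightarrow> (\<forall>x\<in>#andch F. eval M x)"
  by (cases F) (auto simp: andch_def)
lemma eval_orch: "eval M F \<longleftrightarrow> (\<exists>x\<in>#orch F. eval M x)"
  by (cases F) (auto simp: orch_def)
lemma fsize_andch: "sum_mset (image_mset fsize (andch F)) = fsize F"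
  by (cases F) (auto simp: andch_def)
lemma fsize_orch: "sum_mset (image_mset fsize (orch F)) = fsize F"
  by (cases F) (auto simp: orch_def)
lemma map_andch: "image_mset (map_acf h) (andch F) = andch (map_acf h F)"
  by (cases F) (auto simp: andch_def)
lemma map_orch: "image_mset (map_acf h) (orch F) = orch (map_acf h F)"
  by (cases F) (auto simp: orch_def)

lemma depth_AND_le: "(\<forall>x\<in>#X. depth x \<le> l) \<Longrightarrow> depth (AND X) \<le> Suc l"
  by (auto simp: Max_le_iff)
lemma depth_OR_le: "(\<forall>x\<in>#X. depth x \<le> l) \<Longrightarrow> depth (OR X) \<le> Suc l"
  by (auto simp: Max_le_iff)

fun chainM :: "nat \<Rightarrow> (nat \<Rightarrow> nat \<Rightarrow> nat \<Rightarrow> nat \<Rightarrow> 'x multiset) \<Rightarrow> nat list \<Rightarrow> nat \<Rightarrow> nat \<Rightarrow> 'x multiset multiset" where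
  "chainM n f (p # p' # rest) a b = (if rest = [] then {# f p p' a b #} else
      (\<Sum>c\<in>{1..n}. image_mset (\<lambda>Y. f p p' a c + Y) (chainM n f (p' # rest) c b)))"
| "chainM n f _ a b = {#}"

fun chain_ok :: "(nat \<Rightarrow> nat \<Rightarrow> bool) \<Rightarrow> nat list \<Rightarrow> bool" where
  "chain_ok V (p # p' # rest) = (V p p' \<and> chain_ok V (p' # rest))"
| "chain_ok V _ = True"

lemma chain_all:
  assumes "chain_ok V ps" "a \<in> {1..n}" "b \<in> {1..n}"
    and "\<And>p p' c c'. V p p' \<Longrightarrow> c \<in> {1..n} \<Longrightarrow> c' \<in> {1..n} \<Longrightarrow> \<forall>x\<in>#f p p' c c'. Q x"
  shows "\<forall>X\<in>#chainM n f ps a b. \<forall>x\<in>#X. Q x"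
  using assms(1-3)
proof (induction ps arbitrary: a rule: induct_list012)
  case (3 p p' rest)
  show ?case
  proof (cases "rest = []")
    case True
    then show ?thesis using 3 assms(4)[of p p' a b] by auto
  next
    case False
    show ?thesis
    proof (intro ballI)
      fix X x assume X: "X \<in># chainM n f (p # p' # rest) a b" and x: "x \<in># X"
      from X False obtain c Y where c: "c \<in> {1..n}" and Y: "Y \<in># chainM n f (p' # rest) c b"
        and XY: "X = f p p' a c + Y" by (auto simp: set_mset_sum)
      have "\<forall>x\<in>#Y. Q x" using 3(2)[of c] 3(3-5) c Y by auto
      moreover have "\<forall>x\<in>#f p p' a c. Q x" using assms(4) 3 c by auto
      ultimately show "Q x" using x XY by auto
    qed
  qed
qed auto

lemma chain_size_count:
  "length ps \<ge> 2 \<Longrightarrow> size (chainM n f ps a b) = n ^ (length ps - 2)"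
proof (induction ps arbitrary: a rule: induct_list012)
  case (3 p p' rest)
  show ?case
  proof (cases "rest = []")
    case False
    have "size (chainM n f (p' # rest) c b) = n ^ (length rest - 1)" for c
      using 3(2) False by (cases rest) auto
    moreover have "size (sum g A) = (\<Sum>c\<in>A. size (g c))" if "finite A" for g :: "nat \<Rightarrow> 'b multiset" and A
      using that by (induction A rule: finite_induct) auto
    ultimately have "size (chainM n f (p # p' # rest) a b) = (\<Sum>c\<in>{1..n}. n ^ (length rest - 1))"
      using False by (simp del: chainM.simps add: chainM.simps(1)[of n f p p' rest])
    then show ?thesis using False by (cases rest) auto
  qed simp
qed auto

lemma sum_mset_image_sum: "finite A \<Longrightarrow> sum_mset (image_mset h (sum g A)) = (\<Sum>c\<in>A. sum_mset (image_mset h (g c)))"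
  by (induction A rule: finite_induct) auto

lemma sum_mset_le_const: "(\<And>x. x \<in># C \<Longrightarrow> h x \<le> (B::nat)) \<Longrightarrow> sum_mset (image_mset h C) \<le> size C * B"
  by (induction C) (auto simp: add_mono)

lemma chain_size:
  fixes g :: "'x \<Rightarrow> nat"
  assumes "chain_ok V ps" "length ps \<ge> 2" "a \<in> {1..n}" "b \<in> {1..n}"
    and "\<And>p p' c c'. V p p' \<Longrightarrow> c \<in> {1..n} \<Longrightarrow> c' \<in> {1..n} \<Longrightarrow> sum_mset (image_mset g (f p p' c c')) \<le> S"
  shows "sum_mset (image_mset (\<lambda>X. sum_mset (image_mset g X)) (chainM n f ps a b)) \<le> n ^ (length ps - 2) * (length ps - 1) * S"
  using assms(1-4)
proof (induction ps arbitrary: a rule: induct_list012)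
  case (3 p p' rest)
  show ?case
  proof (cases "rest = []")
    case True
    then show ?thesis using 3 assms(5)[of p p' a b] by auto
  next
    case False
    let ?h = "\<lambda>X. sum_mset (image_mset g X)"
    let ?L = "length rest"
    have IH: "(\<lambda>C. sum_mset (image_mset ?h C)) (chainM n f (p' # rest) c b) \<le> n ^ (?L - 1) * ?L * S" if "c \<in> {1..n}" for c
      using 3(2)[of c] 3(3-6) that False by (cases rest) auto
    have "(\<lambda>C. sum_mset (image_mset ?h C)) (chainM n f (p # p' # rest) a b) =
       (\<Sum>c\<in>{1..n}. sum_mset (image_mset (\<lambda>Y. ?h (f p p' a c) + ?h Y) (chainM n f (p' # rest) c b)))"
      using False by (simp add: sum_mset_image_sum multiset.map_comp comp_def)
    also have "\<dots> = (\<Sum>c\<in>{1..n}. size (chainM n f (p' # rest) c b) * ?h (f p p' a c) + (\<lambda>C. sum_mset (image_mset ?h C)) (chainM n f (p' # rest) c b))"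
      by (simp add: sum_mset.distrib)
    also have "\<dots> \<le> (\<Sum>c\<in>{1..n}. n ^ (?L - 1) * S + n ^ (?L - 1) * ?L * S)"
    proof (rule sum_mono)
      fix c assume c: "c \<in> {1..n}"
      have "size (chainM n f (p' # rest) c b) = n ^ (?L - 1)"
        using chain_size_count[of "p' # rest" n f c b] False by (cases rest) auto
      moreover have "?h (f p p' a c) \<le> S" using assms(5)[of p p' a c] 3 c by auto
      ultimately show "size (chainM n f (p' # rest) c b) * ?h (f p p' a c) + (\<lambda>C. sum_mset (image_mset ?h C)) (chainM n f (p' # rest) c b)
          \<le> n ^ (?L - 1) * S + n ^ (?L - 1) * ?L * S" using IH[OF c] by (simp add: add_mono)
    qed
    also have "\<dots> = n * n ^ (?L - 1) * (?L + 1) * S" by (simp add: algebra_simps)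
    also have "\<dots> = n ^ (length (p # p' # rest) - 2) * (length (p # p' # rest) - 1) * S"
      using False by (cases rest) auto
    finally show ?thesis .
  qed
qed auto

lemma image_mset_sum': "image_mset h (sum g A) = (\<Sum>c\<in>A. image_mset h (g c))"
  by (induction A rule: infinite_finite_induct) auto

lemma chain_ok_le: "(\<And>p p'. V p p' \<Longrightarrow> p \<le> p') \<Longrightarrow> chain_ok V ps \<Longrightarrow> ps \<noteq> [] \<Longrightarrow> hd ps \<le> last ps"
  by (induction ps rule: induct_list012) (auto, fastforce)

lemma chain_inv:
  assumes "chain_ok V ps" "length ps \<ge> 2" "a \<in> {1..n}" "b \<in> {1..n}"
    and perm: "\<And>p p'. V p p' \<Longrightarrow> G p permutes {1..n} \<and> G p' permutes {1..n}"
    and piece: "\<And>p p' c c'. V p p' \<Longrightarrow> c \<in> {1..n} \<Longrightarrow> c' \<in> {1..n} \<Longrightarrow>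
        image_mset h (f p p' c c') = f p p' (G p c) (G p' c')"
  shows "image_mset (image_mset h) (chainM n f ps a b) = chainM n f ps (G (hd ps) a) (G (last ps) b)"
  using assms(1-4)
proof (induction ps arbitrary: a rule: induct_list012)
  case (3 p p' rest)
  show ?case
  proof (cases "rest = []")
    case True
    then show ?thesis using 3 piece[of p p' a b] by auto
  next
    case False
    have pp: "G p' permutes {1..n}" using perm 3 by auto
    have IH: "image_mset (image_mset h) (chainM n f (p' # rest) c b) = chainM n f (p' # rest) (G p' c) (G (last rest) b)"
      if "c \<in> {1..n}" for c
    proof -
      have "Suc 0 \<le> length rest" using False by (cases rest) auto
      then show ?thesis using 3(2)[of c] 3(3-6) that False by auto
    qed
    have "image_mset (image_mset h) (chainM n f (p # p' # rest) a b) =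
      (\<Sum>c\<in>{1..n}. image_mset (\<lambda>Y. f p p' (G p a) (G p' c) + Y) (image_mset (image_mset h) (chainM n f (p' # rest) c b)))"
      using False 3 by (simp add: image_mset_sum' multiset.map_comp comp_def piece)
    also have "\<dots> = (\<Sum>c\<in>{1..n}. image_mset (\<lambda>Y. f p p' (G p a) (G p' c) + Y) (chainM n f (p' # rest) (G p' c) (G (last rest) b)))"
      using IH by simp
    also have "\<dots> = (\<Sum>c\<in>{1..n}. image_mset (\<lambda>Y. f p p' (G p a) c + Y) (chainM n f (p' # rest) c (G (last rest) b)))"
      using sum.reindex_bij_betw[OF permutes_imp_bij[OF pp], of "\<lambda>c. image_mset (\<lambda>Y. f p p' (G p a) c + Y) (chainM n f (p' # rest) c (G (last rest) b))"]
      by simp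
    also have "\<dots> = chainM n f (p # p' # rest) (G (hd (p # p' # rest)) a) (G (last (p # p' # rest)) b)"
      using False by simp
    finally show ?thesis .
  qed
qed auto

lemma chain_sem:
  assumes "chain_ok V ps" "length ps \<ge> 2" "a \<in> {1..n}" "b \<in> {1..n}"
    and le: "\<And>p p'. V p p' \<Longrightarrow> p \<le> p'"
    and piece: "\<And>p p' c c'. V p p' \<Longrightarrow> c \<in> {1..n} \<Longrightarrow> c' \<in> {1..n} \<Longrightarrow>
        (\<forall>x\<in>#f p p' c c'. P x) \<longleftrightarrow> R p p' c = c'"
    and range: "\<And>p p' c. V p p' \<Longrightarrow> c \<in> {1..n} \<Longrightarrow> R p p' c \<in> {1..n}"
    and comp: "\<And>p p' p'' c. p \<le> p' \<Longrightarrow> p' \<le> p'' \<Longrightarrow> R p' p'' (R p p' c) = R p p'' c"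
  shows "(\<exists>X\<in>#chainM n f ps a b. \<forall>x\<in>#X. P x) \<longleftrightarrow> R (hd ps) (last ps) a = b"
  using assms(1-4)
proof (induction ps arbitrary: a rule: induct_list012)
  case (3 p p' rest)
  show ?case
  proof (cases "rest = []")
    case True
    then show ?thesis using 3 piece[of p p' a b] by auto
  next
    case False
    have IH: "(\<exists>X\<in>#chainM n f (p' # rest) c b. \<forall>x\<in>#X. P x) \<longleftrightarrow> R p' (last rest) c = b"
      if "c \<in> {1..n}" for c
    proof -
      have "Suc 0 \<le> length rest" using False by (cases rest) auto
      then show ?thesis using 3(2)[of c] 3(3-6) that False by auto
    qed
    have lel: "p' \<le> last rest" using chain_ok_le[of V "p' # rest", OF le] 3 False by auto
    have "(\<exists>X\<in>#chainM n f (p # p' # rest) a b. \<forall>x\<in>#X. P x) \<longleftrightarrow>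
       (\<exists>c\<in>{1..n}. (\<forall>x\<in>#f p p' a c. P x) \<and> (\<exists>X\<in>#chainM n f (p' # rest) c b. \<forall>x\<in>#X. P x))"
      using False by (auto simp: set_mset_sum)
    also have "\<dots> \<longleftrightarrow> (\<exists>c\<in>{1..n}. R p p' a = c \<and> R p' (last rest) c = b)"
      using IH piece[of p p' a] 3 by auto
    also have "\<dots> \<longleftrightarrow> R p' (last rest) (R p p' a) = b"
      using range[of p p' a] 3 by auto
    also have "\<dots> \<longleftrightarrow> R p (last rest) a = b"
      using comp[OF le lel, of p] 3 by auto
    finally show ?thesis using False by simp
  qed
qed auto

function brk :: "nat \<Rightarrow> nat \<Rightarrow> nat \<Rightarrow> nat list" where
  "brk q s t = (if q = 0 \<or> t \<le> s + q then [s, t] else s # brk q (s + q) t)"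
  by auto
termination by (relation "measure (\<lambda>(q, s, t). t - s)") auto

declare brk.simps[simp del]

lemma brk_base: "q = 0 \<or> t \<le> s + q \<Longrightarrow> brk q s t = [s, t]"
  by (subst brk.simps) auto
lemma brk_step: "0 < q \<Longrightarrow> s + q < t \<Longrightarrow> brk q s t = s # brk q (s + q) t"
  by (subst brk.simps) auto

lemma brk_props: "length (brk q s t) \<ge> 2 \<and> hd (brk q s t) = s \<and> last (brk q s t) = t"
proof (induction q s t rule: brk.induct)
  case (1 q s t)
  show ?case
  proof (cases "q = 0 \<or> t \<le> s + q")
    case True
    then show ?thesis by (simp add: brk_base)
  next
    case False
    then have "brk q s t = s # brk q (s + q) t" by (simp add: brk_step)
    moreover have "length (brk q (s+q) t) \<ge> 2 \<and> last (brk q (s+q) t) = t" using 1 False by auto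
    ultimately show ?thesis by (cases "brk q (s+q) t") auto
  qed
qed

lemma brk_ok: "s0 \<le> s \<Longrightarrow> s < t \<Longrightarrow> 0 < q \<Longrightarrow>
  chain_ok (\<lambda>p p'. s0 \<le> p \<and> p < p' \<and> p' - p \<le> q \<and> p' \<le> t) (brk q s t)"
proof (induction q s t rule: brk.induct)
  case (1 q s t)
  show ?case
  proof (cases "t \<le> s + q")
    case True
    then show ?thesis using 1(2-) by (simp add: brk_base)
  next
    case False
    have IH: "chain_ok (\<lambda>p p'. s0 \<le> p \<and> p < p' \<and> p' - p \<le> q \<and> p' \<le> t) (brk q (s+q) t)"
      using 1 False by auto
    obtain r where r: "brk q (s+q) t = (s+q) # r" using brk_props[of q "s+q" t] by (cases "brk q (s+q) t") auto
    have "brk q s t = s # (s+q) # r" using False 1(2-) r by (simp add: brk_step)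
    then show ?thesis using IH r False 1(2-) by simp
  qed
qed

lemma brk_length: "0 < q \<Longrightarrow> s < t \<Longrightarrow> t - s \<le> m * q \<Longrightarrow> length (brk q s t) \<le> m + 1"
proof (induction q s t arbitrary: m rule: brk.induct)
  case (1 q s t)
  show ?case
  proof (cases "t \<le> s + q")
    case True
    have "m \<ge> 1" using 1(2-) by (cases m) auto
    then show ?thesis using True 1(2-) by (simp add: brk_base)
  next
    case False
    have "m \<ge> 2" using 1(2-) False by (cases m; cases "m - 1") auto
    then have "t - (s + q) \<le> (m - 1) * q" using 1(2-) False by (auto simp: diff_mult_distrib)
    then have "length (brk q (s+q) t) \<le> m" using 1(1)[of "m - 1"] 1(2-) False \<open>m \<ge> 2\<close> by auto
    then show ?thesis using False 1(2-) by (simp add: brk_step)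
  qed
qed

primrec F :: "nat \<Rightarrow> nat \<Rightarrow> nat \<Rightarrow> bool \<Rightarrow> nat \<Rightarrow> nat \<Rightarrow> nat \<Rightarrow> nat \<Rightarrow> var acf" where
  "F n m 0 = (\<lambda>sg s t a b. Lit True (t, a, b))"
| "F n m (Suc l) = (\<lambda>sg s t a b. if sg then
      OR (image_mset AND (chainM n (\<lambda>p p' c c'. andch (F n m l False p p' c c')) (brk (m ^ l) s t) a b))
    else
      AND (image_mset OR (\<Sum>b'\<in>{1..n} - {b}. chainM n (\<lambda>p p' c c'. \<Sum>c''\<in>{1..n} - {c'}. orch (F n m l True p p' c c'')) (brk (m ^ l) s t) a b')))"


lemma orch_OR[simp]: "orch (OR S) = S" by (simp add: orch_def)
lemma andch_AND[simp]: "andch (AND S) = S" by (simp add: andch_def)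
lemma orch_Lit[simp]: "orch (Lit p v) = {#Lit p v#}" by (simp add: orch_def)
lemma andch_Lit[simp]: "andch (Lit p v) = {#Lit p v#}" by (simp add: andch_def)

lemma set_OR_sub: "(\<forall>x\<in>#Y. set_acf x \<subseteq> V) \<Longrightarrow> set_acf (OR Y) \<subseteq> V" by auto
lemma set_AND_sub: "(\<forall>x\<in>#Y. set_acf x \<subseteq> V) \<Longrightarrow> set_acf (AND Y) \<subseteq> V" by auto

lemma F_prop:
  assumes "m \<ge> 1"
  shows "s < t \<Longrightarrow> t \<le> k \<Longrightarrow> t - s \<le> m ^ l \<Longrightarrow> a \<in> {1..n} \<Longrightarrow> b \<in> {1..n} \<Longrightarrow>
    (if sg then (\<forall>x\<in>#orch (F n m l sg s t a b). depth x \<le> l \<and> set_acf x \<subseteq> valid_vars n k)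
     else (\<forall>x\<in>#andch (F n m l sg s t a b). depth x \<le> l \<and> set_acf x \<subseteq> valid_vars n k))"
proof (induction l arbitrary: sg s t a b)
  case 0
  then show ?case by (auto simp: valid_vars_def)
next
  case (Suc l)
  let ?V = "\<lambda>p p'. s \<le> p \<and> p < p' \<and> p' - p \<le> m ^ l \<and> p' \<le> t"
  have ok: "chain_ok ?V (brk (m ^ l) s t)" using brk_ok[of s s t "m ^ l"] Suc.prems assms by auto
  show ?case
  proof (cases sg)
    case True
    have "\<forall>X\<in>#chainM n (\<lambda>p p' c c'. andch (F n m l False p p' c c')) (brk (m ^ l) s t) a b.
        \<forall>x\<in>#X. depth x \<le> l \<and> set_acf x \<subseteq> valid_vars n k"
    proof (rule chain_all[OF ok Suc.prems(4,5)])
      fix p p' c c' assume "?V p p'" "c \<in> {1..n}" "c' \<in> {1..n}"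
      then show "\<forall>x\<in>#andch (F n m l False p p' c c'). depth x \<le> l \<and> set_acf x \<subseteq> valid_vars n k"
        using Suc.IH[of p p' c c' False] Suc.prems by auto
    qed
    then show ?thesis using True by (auto intro!: depth_AND_le set_AND_sub simp del: acf.set)
  next
    case False
    have "\<forall>X\<in>#chainM n (\<lambda>p p' c c'. \<Sum>c''\<in>{1..n} - {c'}. orch (F n m l True p p' c c'')) (brk (m ^ l) s t) a b'.
        \<forall>x\<in>#X. depth x \<le> l \<and> set_acf x \<subseteq> valid_vars n k" if b': "b' \<in> {1..n}" for b'
    proof (rule chain_all[OF ok Suc.prems(4) b'])
      fix p p' c c' assume "?V p p'" "c \<in> {1..n}" "c' \<in> {1..n}"
      then have IH': "\<forall>x\<in>#orch (F n m l True p p' c y). depth x \<le> l \<and> set_acf x \<subseteq> valid_vars n k"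
        if "y \<in> {1..n}" for y
        using Suc.IH[of p p' c y True] Suc.prems that by auto
      show "\<forall>x\<in>#(\<Sum>c''\<in>{1..n} - {c'}. orch (F n m l True p p' c c'')). depth x \<le> l \<and> set_acf x \<subseteq> valid_vars n k"
      proof
        fix x assume "x \<in># (\<Sum>c''\<in>{1..n} - {c'}. orch (F n m l True p p' c c''))"
        then have "x \<in> (\<Union>y\<in>{1..n} - {c'}. set_mset (orch (F n m l True p p' c y)))"
          by (simp only: set_mset_sum finite_Diff finite_atLeastAtMost)
        then obtain y where "y \<in> {1..n}" "x \<in># orch (F n m l True p p' c y)" by blast
        then show "depth x \<le> l \<and> set_acf x \<subseteq> valid_vars n k" using IH' by blast
      qed
    qed
    then have "\<forall>Y\<in>#(\<Sum>b'\<in>{1..n} - {b}. chainM n (\<lambda>p p' c c'. \<Sum>c''\<in>{1..n} - {c'}. orch (F n m l True p p' c c'')) (brk (m ^ l) s t) a b').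
        \<forall>x\<in>#Y. depth x \<le> l \<and> set_acf x \<subseteq> valid_vars n k"
      by (simp add: set_mset_sum) (meson DiffD1 atLeastAtMost_iff)
    then show ?thesis using False by (auto intro!: depth_OR_le set_OR_sub simp del: acf.set)
  qed
qed


lemma sum_perm_minus:
  assumes "\<sigma> permutes {1..n}" "b \<in> {1..n}"
  shows "(\<Sum>x\<in>{1..n} - {b}. f (\<sigma> x)) = (\<Sum>x\<in>{1..n} - {\<sigma> b}. f x)"
proof -
  have "bij_betw \<sigma> ({1..n} - {b}) ({1..n} - {\<sigma> b})"
  proof (rule bij_betw_DiffI[OF permutes_imp_bij[OF assms(1)]])
    show "bij_betw \<sigma> {b} {\<sigma> b}" by (simp add: bij_betw_def)
    show "{b} \<subseteq> {1..n}" using assms(2) by auto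
    show "{\<sigma> b} \<subseteq> {1..n}" using assms by (metis empty_subsetI insert_subset permutes_in_image)
  qed
  then show ?thesis by (rule sum.reindex_bij_betw)
qed

lemma F_inv:
  assumes "m \<ge> 1" and G: "\<And>p. p \<le> k \<Longrightarrow> gcomp k g p permutes {1..n}"
  shows "s < t \<Longrightarrow> t \<le> k \<Longrightarrow> t - s \<le> m ^ l \<Longrightarrow> a \<in> {1..n} \<Longrightarrow> b \<in> {1..n} \<Longrightarrow>
    map_acf (act k g) (F n m l sg s t a b) = F n m l sg s t (gcomp k g s a) (gcomp k g t b)"
proof (induction l arbitrary: sg s t a b)
  case 0
  then have "t - 1 = s" by auto
  then show ?case by (simp add: act_def)
next
  case (Suc l)
  let ?G = "gcomp k g"
  let ?h = "map_acf (act k g)"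
  let ?V = "\<lambda>p p'. s \<le> p \<and> p < p' \<and> p' - p \<le> m ^ l \<and> p' \<le> t"
  have ok: "chain_ok ?V (brk (m ^ l) s t)" using brk_ok[of s s t "m ^ l"] Suc.prems assms by auto
  have len: "length (brk (m ^ l) s t) \<ge> 2" and hd: "hd (brk (m ^ l) s t) = s" and last: "last (brk (m ^ l) s t) = t"
    using brk_props by auto
  have perm: "?G p permutes {1..n} \<and> ?G p' permutes {1..n}" if "?V p p'" for p p'
    using G that Suc.prems by auto
  have inr: "?G p c \<in> {1..n}" if "p \<le> k" "c \<in> {1..n}" for p c
    using G[OF that(1)] that(2) by (metis permutes_in_image)
  show ?case
  proof (cases sg)
    case True
    have "image_mset (image_mset ?h) (chainM n (\<lambda>p p' c c'. andch (F n m l False p p' c c')) (brk (m ^ l) s t) a b)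
      = chainM n (\<lambda>p p' c c'. andch (F n m l False p p' c c')) (brk (m ^ l) s t) (?G s a) (?G t b)"
    proof -
      have piece: "image_mset ?h (andch (F n m l False p p' c c')) = andch (F n m l False p p' (?G p c) (?G p' c'))"
        if V: "?V p p'" and c: "c \<in> {1..n}" and c': "c' \<in> {1..n}" for p p' c c'
        using Suc.IH[of p p' c c' False] V c c' Suc.prems by (simp add: map_andch)
      show ?thesis
        using chain_inv[OF ok len Suc.prems(4,5), of ?G ?h "\<lambda>p p' c c'. andch (F n m l False p p' c c')", OF perm piece]
        by (simp add: hd last)
    qed
    then have "image_mset AND (image_mset (image_mset ?h) (chainM n (\<lambda>p p' c c'. andch (F n m l False p p' c c')) (brk (m ^ l) s t) a b))
      = image_mset AND (chainM n (\<lambda>p p' c c'. andch (F n m l False p p' c c')) (brk (m ^ l) s t) (?G s a) (?G t b))" by simp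
    then show ?thesis using True
      by (simp add: multiset.map_comp comp_def)
  next
    case False
    let ?f = "\<lambda>p p' c c'. \<Sum>c''\<in>{1..n} - {c'}. orch (F n m l True p p' c c'')"
    have piece: "image_mset ?h (?f p p' c c') = ?f p p' (?G p c) (?G p' c')"
      if V: "?V p p'" and c: "c \<in> {1..n}" and c': "c' \<in> {1..n}" for p p' c c'
    proof -
      have "image_mset ?h (?f p p' c c') = (\<Sum>c''\<in>{1..n} - {c'}. orch (F n m l True p p' (?G p c) (?G p' c'')))"
        using Suc.IH[of p p' c _ True] V c Suc.prems by (simp add: image_mset_sum' map_orch)
      also have "\<dots> = ?f p p' (?G p c) (?G p' c')"
        using sum_perm_minus[of "?G p'" n c' "\<lambda>x. orch (F n m l True p p' (?G p c) x)"] perm[OF V] c' by simp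
      finally show ?thesis .
    qed
    have "image_mset (image_mset ?h) (\<Sum>b'\<in>{1..n} - {b}. chainM n ?f (brk (m ^ l) s t) a b')
        = (\<Sum>b'\<in>{1..n} - {b}. chainM n ?f (brk (m ^ l) s t) (?G s a) (?G t b'))"
    proof -
      have each: "image_mset (image_mset ?h) (chainM n ?f (brk (m ^ l) s t) a b') = chainM n ?f (brk (m ^ l) s t) (?G s a) (?G t b')"
        if "b' \<in> {1..n} - {b}" for b'
        using chain_inv[of ?V "brk (m ^ l) s t" a n b' ?G ?h ?f, OF ok len Suc.prems(4) _ perm piece] that
        by (simp add: hd last)
      show ?thesis unfolding image_mset_sum' using each by (rule sum.cong[OF refl])
    qed
    also have "\<dots> = (\<Sum>b'\<in>{1..n} - {?G t b}. chainM n ?f (brk (m ^ l) s t) (?G s a) b')"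
      using sum_perm_minus[of "?G t" n b "\<lambda>x. chainM n ?f (brk (m ^ l) s t) (?G s a) x"] G Suc.prems by simp
    finally have "image_mset OR (image_mset (image_mset ?h) (\<Sum>b'\<in>{1..n} - {b}. chainM n ?f (brk (m ^ l) s t) a b'))
      = image_mset OR (\<Sum>b'\<in>{1..n} - {?G t b}. chainM n ?f (brk (m ^ l) s t) (?G s a) b')" by simp
    then show ?thesis using False
      by (simp add: multiset.map_comp comp_def)
  qed
qed


primrec pf :: "(nat \<Rightarrow> nat \<Rightarrow> nat) \<Rightarrow> nat \<Rightarrow> nat \<Rightarrow> nat \<Rightarrow> nat" where
  "pf \<sigma> s 0 a = a"
| "pf \<sigma> s (Suc t) a = (if Suc t \<le> s then a else \<sigma> (Suc t) (pf \<sigma> s t a))"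

lemma pf_le: "t \<le> s \<Longrightarrow> pf \<sigma> s t a = a"
  by (induction t) auto

lemma pf_comp: "s \<le> u \<Longrightarrow> u \<le> t \<Longrightarrow> pf \<sigma> u t (pf \<sigma> s u a) = pf \<sigma> s t a"
proof (induction t)
  case 0
  then show ?case by auto
next
  case (Suc t)
  show ?case
  proof (cases "Suc t \<le> u")
    case True
    then have "u = Suc t" using Suc by auto
    then show ?thesis by simp
  next
    case False
    then show ?thesis using Suc by auto
  qed
qed

lemma pf_range: "(\<And>i a. 1 \<le> i \<Longrightarrow> i \<le> k \<Longrightarrow> a \<in> {1..n} \<Longrightarrow> \<sigma> i a \<in> {1..n}) \<Longrightarrow> t \<le> k \<Longrightarrow> a \<in> {1..n}
   \<Longrightarrow> pf \<sigma> s t a \<in> {1..n}"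
  by (induction t) auto

lemma pf_one: "0 < t \<Longrightarrow> pf \<sigma> (t - 1) t a = \<sigma> t a"
  by (cases t) (auto simp: pf_le)

lemma F_sem:
  assumes "m \<ge> 1"
    and sig: "\<And>i a. 1 \<le> i \<Longrightarrow> i \<le> k \<Longrightarrow> a \<in> {1..n} \<Longrightarrow> \<sigma> i a \<in> {1..n}"
    and Msig: "\<And>i a b. 1 \<le> i \<Longrightarrow> i \<le> k \<Longrightarrow> a \<in> {1..n} \<Longrightarrow> b \<in> {1..n} \<Longrightarrow> M (i, a, b) \<longleftrightarrow> \<sigma> i a = b"
  shows "s < t \<Longrightarrow> t \<le> k \<Longrightarrow> t - s \<le> m ^ l \<Longrightarrow> a \<in> {1..n} \<Longrightarrow> b \<in> {1..n} \<Longrightarrow>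
    eval M (F n m l sg s t a b) \<longleftrightarrow> pf \<sigma> s t a = b"
proof (induction l arbitrary: sg s t a b)
  case 0
  then have "t - 1 = s" by auto
  then show ?case using Msig[of t a b] 0 pf_one[of t \<sigma> a] by auto
next
  case (Suc l)
  let ?V = "\<lambda>p p'. s \<le> p \<and> p < p' \<and> p' - p \<le> m ^ l \<and> p' \<le> t"
  have ok: "chain_ok ?V (brk (m ^ l) s t)" using brk_ok[of s s t "m ^ l"] Suc.prems assms by auto
  have len: "length (brk (m ^ l) s t) \<ge> 2" and hd: "hd (brk (m ^ l) s t) = s" and last: "last (brk (m ^ l) s t) = t"
    using brk_props by auto
  have range: "pf \<sigma> p p' c \<in> {1..n}" if "?V p p'" "c \<in> {1..n}" for p p' c
    using pf_range[OF sig, where t=p' and a=c and s=p] that Suc.prems by auto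
  have comp: "pf \<sigma> p' p'' (pf \<sigma> p p' c) = pf \<sigma> p p'' c" if "p \<le> p'" "p' \<le> p''" for p p' p'' c
    using pf_comp that by blast
  show ?case
  proof (cases sg)
    case True
    have piece: "(\<forall>x\<in>#andch (F n m l False p p' c c'). eval M x) \<longleftrightarrow> pf \<sigma> p p' c = c'"
      if "?V p p'" "c \<in> {1..n}" "c' \<in> {1..n}" for p p' c c'
      using Suc.IH[of p p' c c' False] that Suc.prems eval_andch[of M "F n m l False p p' c c'"] by auto
    have "(\<exists>X\<in>#chainM n (\<lambda>p p' c c'. andch (F n m l False p p' c c')) (brk (m ^ l) s t) a b. \<forall>x\<in>#X. eval M x)
        \<longleftrightarrow> pf \<sigma> s t a = b"
      using chain_sem[of ?V "brk (m ^ l) s t" a n b "\<lambda>p p' c c'. andch (F n m l False p p' c c')" "eval M" "pf \<sigma>",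
          OF ok len Suc.prems(4,5) _ piece range comp] by (simp add: hd last)
    then show ?thesis using True by simp
  next
    case False
    let ?f = "\<lambda>p p' c c'. \<Sum>c''\<in>{1..n} - {c'}. orch (F n m l True p p' c c'')"
    have piece: "(\<forall>x\<in>#?f p p' c c'. \<not> eval M x) \<longleftrightarrow> pf \<sigma> p p' c = c'"
      if V: "?V p p'" and c: "c \<in> {1..n}" and c': "c' \<in> {1..n}" for p p' c c'
    proof -
      have "(\<forall>x\<in>#?f p p' c c'. \<not> eval M x) \<longleftrightarrow> (\<forall>c''\<in>{1..n} - {c'}. \<not> eval M (F n m l True p p' c c''))"
        by (auto simp: set_mset_sum eval_orch[of M "F n m l True p p' c _"])
      also have "\<dots> \<longleftrightarrow> (\<forall>c''\<in>{1..n} - {c'}. pf \<sigma> p p' c \<noteq> c'')"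
        using Suc.IH[of p p' c _ True] V c Suc.prems by auto
      also have "\<dots> \<longleftrightarrow> pf \<sigma> p p' c = c'" using range[OF V c] c' by auto
      finally show ?thesis .
    qed
    have each: "(\<exists>X\<in>#chainM n ?f (brk (m ^ l) s t) a b'. \<forall>x\<in>#X. \<not> eval M x) \<longleftrightarrow> pf \<sigma> s t a = b'"
      if "b' \<in> {1..n}" for b'
      using chain_sem[of ?V "brk (m ^ l) s t" a n b' ?f "\<lambda>x. \<not> eval M x" "pf \<sigma>",
          OF ok len Suc.prems(4) that _ piece range comp] by (simp add: hd last)
    have pr: "pf \<sigma> s t a \<in> {1..n}" using pf_range[OF sig, where t=t and a=a and s=s] Suc.prems by auto
    have "eval M (F n m (Suc l) sg s t a b) \<longleftrightarrow>
       \<not> (\<exists>b'\<in>{1..n} - {b}. \<exists>X\<in>#chainM n ?f (brk (m ^ l) s t) a b'. \<forall>x\<in>#X. \<not> eval M x)"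
      using False by (auto simp: set_mset_sum)
    also have "\<dots> \<longleftrightarrow> \<not> (\<exists>b'\<in>{1..n} - {b}. pf \<sigma> s t a = b')" using each by auto
    also have "\<dots> \<longleftrightarrow> pf \<sigma> s t a = b" using pr Suc.prems by auto
    finally show ?thesis .
  qed
qed


lemma len_bound: "n \<ge> 1 \<Longrightarrow> 2 \<le> L \<Longrightarrow> L \<le> m + 1 \<Longrightarrow> n ^ (L - 2) * (L - 1) \<le> n ^ (m - 1) * (m::nat)"
  by (intro mult_le_mono power_increasing) auto

lemma F_size:
  assumes "m \<ge> 1" "n \<ge> 1"
  shows "s < t \<Longrightarrow> t - s \<le> m ^ l \<Longrightarrow> a \<in> {1..n} \<Longrightarrow> b \<in> {1..n} \<Longrightarrow>
    fsize (F n m l sg s t a b) \<le> (m * n ^ (m + 1)) ^ l"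
proof (induction l arbitrary: sg s t a b)
  case 0
  then show ?case by simp
next
  case (Suc l)
  let ?T = "(m * n ^ (m + 1)) ^ l"
  let ?V = "\<lambda>p p'. s \<le> p \<and> p < p' \<and> p' - p \<le> m ^ l \<and> p' \<le> t"
  let ?L = "length (brk (m ^ l) s t)"
  have ok: "chain_ok ?V (brk (m ^ l) s t)" using brk_ok[of s s t "m ^ l"] Suc.prems assms by auto
  have len: "?L \<ge> 2" using brk_props by auto
  have lenm: "?L \<le> m + 1" using brk_length[of "m ^ l" s t m] Suc.prems assms by auto
  have lb: "n ^ (?L - 2) * (?L - 1) \<le> n ^ (m - 1) * m" using len_bound[OF assms(2) len lenm] .
  have nm: "n * (n ^ (m - 1) * m) * n = m * n ^ (m + 1)" using assms
    by (cases m) (auto simp: algebra_simps)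
  show ?case
  proof (cases sg)
    case True
    have "sum_mset (image_mset (\<lambda>X. sum_mset (image_mset fsize X)) (chainM n (\<lambda>p p' c c'. andch (F n m l False p p' c c')) (brk (m ^ l) s t) a b))
       \<le> n ^ (?L - 2) * (?L - 1) * ?T"
    proof (rule chain_size[OF ok len Suc.prems(3,4)])
      fix p p' c c' assume "?V p p'" "c \<in> {1..n}" "c' \<in> {1..n}"
      then show "sum_mset (image_mset fsize (andch (F n m l False p p' c c'))) \<le> ?T"
        using Suc.IH[of p p' c c' False] by (simp add: fsize_andch)
    qed
    also have "\<dots> \<le> n ^ (m - 1) * m * ?T" using mult_le_mono1[OF lb] by blast
    also have "\<dots> \<le> (m * n ^ (m + 1)) ^ Suc l"
    proof -
      have "n ^ (m - 1) \<le> n ^ (m + 1)" by (rule power_increasing) (use assms in auto)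
      then have "n ^ (m - 1) * m \<le> m * n ^ (m + 1)" using mult_le_mono1[of "n ^ (m - 1)" "n ^ (m + 1)" m] by (simp add: mult.commute)
      then show ?thesis by (simp add: mult_le_mono1)
    qed
    finally show ?thesis using True by (simp add: multiset.map_comp comp_def)
  next
    case False
    let ?f = "\<lambda>p p' c c'. \<Sum>c''\<in>{1..n} - {c'}. orch (F n m l True p p' c c'')"
    have each: "sum_mset (image_mset (\<lambda>X. sum_mset (image_mset fsize X)) (chainM n ?f (brk (m ^ l) s t) a b'))
       \<le> n ^ (?L - 2) * (?L - 1) * (n * ?T)" if "b' \<in> {1..n}" for b'
    proof (rule chain_size[OF ok len Suc.prems(3) that])
      fix p p' c c' assume V: "?V p p'" and c: "c \<in> {1..n}" and c': "c' \<in> {1..n}"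
      have "sum_mset (image_mset fsize (?f p p' c c')) = (\<Sum>c''\<in>{1..n} - {c'}. fsize (F n m l True p p' c c''))"
        by (simp add: sum_mset_image_sum fsize_orch)
      also have "\<dots> \<le> (\<Sum>c''\<in>{1..n} - {c'}. ?T)"
        by (rule sum_mono) (use Suc.IH V c Suc.prems in auto)
      also have "\<dots> = card ({1..n} - {c'}) * ?T" by simp
      also have "\<dots> \<le> n * ?T"
        using card_mono[of "{1..n}" "{1..n}-{c'}"] by (intro mult_le_mono1) auto
      finally show "sum_mset (image_mset fsize (?f p p' c c')) \<le> n * ?T" .
    qed
    have "fsize (F n m (Suc l) sg s t a b) =
       (\<Sum>b'\<in>{1..n} - {b}. sum_mset (image_mset (\<lambda>X. sum_mset (image_mset fsize X)) (chainM n ?f (brk (m ^ l) s t) a b')))"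
      using False by (simp add: multiset.map_comp comp_def sum_mset_image_sum)
    also have "\<dots> \<le> (\<Sum>b'\<in>{1..n} - {b}. n ^ (?L - 2) * (?L - 1) * (n * ?T))"
      by (rule sum_mono) (use each in auto)
    also have "\<dots> = card ({1..n} - {b}) * (n ^ (?L - 2) * (?L - 1) * (n * ?T))" by simp
    also have "\<dots> \<le> n * (n ^ (?L - 2) * (?L - 1) * (n * ?T))"
      using card_mono[of "{1..n}" "{1..n}-{b}"] by (intro mult_le_mono1) auto
    also have "\<dots> \<le> n * (n ^ (m - 1) * m * (n * ?T))" using mult_le_mono2[OF mult_le_mono1[OF lb]] by blast
    also have "\<dots> = (m * n ^ (m + 1)) ^ Suc l" using nm by (simp add: algebra_simps)
    finally show ?thesis .
  qed
qed


definition sigm :: "nat \<Rightarrow> (var \<Rightarrow> bool) \<Rightarrow> nat \<Rightarrow> nat \<Rightarrow> nat" where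
  "sigm n M i a = (THE b. b \<in> {1..n} \<and> M (i, a, b))"

lemma sigm_props:
  assumes "in_domain n k M" "1 \<le> i" "i \<le> k" "a \<in> {1..n}"
  shows "sigm n M i a \<in> {1..n} \<and> (\<forall>b\<in>{1..n}. M (i, a, b) \<longleftrightarrow> sigm n M i a = b)"
proof -
  have "\<exists>!b. b \<in> {1..n} \<and> M (i, a, b)" using assms unfolding in_domain_def is_perm_matrix_def by auto
  then have "sigm n M i a \<in> {1..n} \<and> M (i, a, sigm n M i a)" unfolding sigm_def by (rule theI')
  then show ?thesis using \<open>\<exists>!b. b \<in> {1..n} \<and> M (i, a, b)\<close> by auto
qed

lemma prodmat_pf:
  assumes "in_domain n k M" "a \<in> {1..n}"
  shows "j \<le> k \<Longrightarrow> b \<in> {1..n} \<Longrightarrow> prodmat n M j a b = (if pf (sigm n M) 0 j a = b then 1 else 0)"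
proof (induction j arbitrary: b)
  case 0
  then show ?case by simp
next
  case (Suc j)
  let ?x = "pf (sigm n M) 0 j a"
  have x: "?x \<in> {1..n}" using pf_range[of k n "sigm n M" j a 0] sigm_props[OF assms(1)] Suc.prems assms(2) by auto
  have "prodmat n M (Suc j) a b = (\<Sum>c=1..n. prodmat n M j a c * (if M (Suc j, c, b) then 1 else 0))"
    by (simp only: prodmat.simps)
  also have "\<dots> = (\<Sum>c=1..n. if c = ?x then (if M (Suc j, ?x, b) then 1 else 0) else 0)"
  proof (rule sum.cong[OF refl])
    fix c assume c: "c \<in> {1..n}"
    have "prodmat n M j a c = (if ?x = c then 1 else 0)" using Suc.IH[OF _ c] Suc.prems by simp
    then show "prodmat n M j a c * (if M (Suc j, c, b) then 1 else 0) = (if c = ?x then (if M (Suc j, ?x, b) then 1 else 0) else 0)"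
      by auto
  qed
  also have "\<dots> = (if M (Suc j, ?x, b) then 1 else 0)" using x by simp
  also have "\<dots> = (if sigm n M (Suc j) ?x = b then 1 else 0)"
  proof -
    have "\<forall>b\<in>{1..n}. M (Suc j, ?x, b) \<longleftrightarrow> sigm n M (Suc j) ?x = b"
      using sigm_props[OF assms(1), of "Suc j" ?x] Suc.prems x by auto
    then have "M (Suc j, ?x, b) \<longleftrightarrow> sigm n M (Suc j) ?x = b" using Suc.prems(2) by blast
    then show ?thesis by simp
  qed
  finally show ?case by simp
qed

lemma Word_pf:
  assumes "in_domain n k M" "n \<ge> 1"
  shows "Word n k M \<longleftrightarrow> pf (sigm n M) 0 k 1 = 1"
  using prodmat_pf[OF assms(1), of 1 k 1] assms(2) unfolding Word_def by auto

lemma gcomp_perm: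
  assumes "group_elem n k g" "p \<le> k"
  shows "gcomp k g p permutes {1..n}"
  using assms unfolding gcomp_def group_elem_def by (auto simp: permutes_id)

lemma main_construct:
  assumes "n \<ge> 1" "m \<ge> 1" "k \<ge> 1" "d \<ge> 1" "k \<le> m ^ d"
  shows "(\<exists>F. is_Sigma (d+1) F \<and> invariant n k F \<and> computes_word n k F \<and> fsize F \<le> (m * n ^ (m + 1)) ^ d) \<and>
         (\<exists>F. is_Pi (d+1) F \<and> invariant n k F \<and> computes_word n k F \<and> fsize F \<le> (m * n ^ (m + 1)) ^ d)"
proof -
  obtain d' where d': "d = Suc d'" using assms(4) by (cases d) auto
  have seg: "(0::nat) < k" "k \<le> k" "k - 0 \<le> m ^ d" and one: "(1::nat) \<in> {1..n}" using assms by auto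
  have inv: "invariant n k (F n m d sg 0 k 1 1)" for sg
    unfolding invariant_def
  proof (intro allI impI)
    fix g assume g: "group_elem n k g"
    have "gcomp k g 0 = id" "gcomp k g k = id" by (auto simp: gcomp_def)
    then show "map_acf (act k g) (F n m d sg 0 k 1 1) = F n m d sg 0 k 1 1"
      using F_inv[OF assms(2) gcomp_perm[OF g] seg one one] by simp
  qed
  have sem: "eval M (F n m d sg 0 k 1 1) \<longleftrightarrow> Word n k M" if "in_domain n k M" for M sg
  proof -
    have A: "\<And>i a. 1 \<le> i \<Longrightarrow> i \<le> k \<Longrightarrow> a \<in> {1..n} \<Longrightarrow> sigm n M i a \<in> {1..n}"
      using sigm_props[OF that] by blast
    have B: "\<And>i a b. 1 \<le> i \<Longrightarrow> i \<le> k \<Longrightarrow> a \<in> {1..n} \<Longrightarrow> b \<in> {1..n} \<Longrightarrow> M (i, a, b) \<longleftrightarrow> sigm n M i a = b"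
      using sigm_props[OF that] by blast
    show ?thesis using F_sem[OF assms(2) A B seg one one] Word_pf[OF that assms(1)] by simp
  qed
  have sz: "fsize (F n m d sg 0 k 1 1) \<le> (m * n ^ (m + 1)) ^ d" for sg
    using F_size[OF assms(2,1) seg(1) seg(3) one one] .
  have pS: "\<forall>x\<in>#orch (F n m d True 0 k 1 1). depth x \<le> d \<and> set_acf x \<subseteq> valid_vars n k"
    using F_prop[OF assms(2) seg one one, of True] by simp
  have pP: "\<forall>x\<in>#andch (F n m d False 0 k 1 1). depth x \<le> d \<and> set_acf x \<subseteq> valid_vars n k"
    using F_prop[OF assms(2) seg one one, of False] by simp
  obtain S where S: "F n m d True 0 k 1 1 = OR S" using d' by simp
  obtain T where T: "F n m d False 0 k 1 1 = AND T" using d' by simp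
  have "is_Sigma (d+1) (F n m d True 0 k 1 1)" unfolding is_Sigma_def S using pS S
    by (auto intro!: depth_OR_le)
  moreover have "computes_word n k (F n m d True 0 k 1 1)" unfolding computes_word_def
  proof (intro conjI allI impI)
    show "set_acf (F n m d True 0 k 1 1) \<subseteq> valid_vars n k" unfolding S
      using pS S by (intro set_OR_sub) auto
  qed (use sem in blast)
  moreover have "is_Pi (d+1) (F n m d False 0 k 1 1)" unfolding is_Pi_def T using pP T
    by (auto intro!: depth_AND_le)
  moreover have "computes_word n k (F n m d False 0 k 1 1)" unfolding computes_word_def
  proof (intro conjI allI impI)
    show "set_acf (F n m d False 0 k 1 1) \<subseteq> valid_vars n k" unfolding T
      using pP T by (intro set_AND_sub) auto
  qed (use sem in blast)
  ultimately show ?thesis using inv sz by blast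
qed

lemma trivial_construct:
  assumes "d \<ge> 1" "k \<ge> 1"
  shows "(\<exists>F. is_Sigma (d+1) F \<and> invariant 1 k F \<and> computes_word 1 k F \<and> fsize F = 0) \<and>
         (\<exists>F. is_Pi (d+1) F \<and> invariant 1 k F \<and> computes_word 1 k F \<and> fsize F = 0)"
proof -
  have W: "Word 1 k M" if "in_domain 1 k M" for M
  proof -
    have "pf (sigm 1 M) 0 k 1 \<in> {1..1}"
      using pf_range[of k 1 "sigm 1 M" k 1 0] sigm_props[OF that] by auto
    then show ?thesis using Word_pf[OF that] by auto
  qed
  have "is_Sigma (d+1) (OR {#Const True#}) \<and> invariant 1 k (OR {#Const True#}) \<and> computes_word 1 k (OR {#Const True#}) \<and> fsize (OR {#Const True#}) = 0"
    using assms W by (auto simp: is_Sigma_def invariant_def computes_word_def)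
  moreover have "is_Pi (d+1) (AND {#Const True#}) \<and> invariant 1 k (AND {#Const True#}) \<and> computes_word 1 k (AND {#Const True#}) \<and> fsize (AND {#Const True#}) = 0"
    using assms W by (auto simp: is_Pi_def invariant_def computes_word_def)
  ultimately show ?thesis by blast
qed


lemma size_nat_bound:
  assumes "n \<ge> 2" "m \<ge> 1"
  shows "(m * n ^ (m + 1)) ^ d \<le> n ^ (3 * m * d)"
proof -
  have "m < 2 ^ m" by (rule less_exp)
  also have "(2::nat) ^ m \<le> n ^ m" using assms by (intro power_mono) auto
  finally have "m * n ^ (m + 1) \<le> n ^ m * n ^ (m + 1)" by simp
  also have "\<dots> = n ^ (2 * m + 1)" by (simp add: power_add[symmetric] mult_2)
  also have "\<dots> \<le> n ^ (3 * m)" using assms by (intro power_increasing) auto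
  finally have "(m * n ^ (m + 1)) ^ d \<le> (n ^ (3 * m)) ^ d" by (intro power_mono) auto
  then show ?thesis by (simp add: power_mult)
qed

lemma main_real:
  assumes "n \<ge> 1" "k \<ge> 1" "d \<ge> 1"
  shows "(\<exists>F. is_Sigma (d+1) F \<and> invariant n k F \<and> computes_word n k F \<and>
            real (fsize F) \<le> real n powr (6 * real d * real k powr (1 / real d))) \<and>
         (\<exists>F. is_Pi (d+1) F \<and> invariant n k F \<and> computes_word n k F \<and>
            real (fsize F) \<le> real n powr (6 * real d * real k powr (1 / real d)))"
proof (cases "n = 1")
  case True
  have "0 \<le> real n powr (6 * real d * real k powr (1 / real d))" by simp
  then show ?thesis using trivial_construct[OF assms(3,2)] True by fastforce
next
  case False
  then have n2: "n \<ge> 2" using assms by auto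
  define r where "r = real k powr (1 / real d)"
  define m where "m = nat \<lceil>r\<rceil>"
  have r1: "r \<ge> 1" unfolding r_def using assms by (intro ge_one_powr_ge_zero) auto
  have mr: "real m \<ge> r" "real m \<le> r + 1" unfolding m_def using r1 by linarith+
  have m1: "m \<ge> 1" using mr r1 by linarith
  have "real k = r ^ d"
  proof -
    have "r ^ d = r powr real d" using r1 by (simp add: powr_realpow)
    also have "\<dots> = real k" unfolding r_def using assms by (simp add: powr_powr)
    finally show ?thesis by simp
  qed
  also have "\<dots> \<le> real m ^ d" using mr r1 by (intro power_mono) auto
  finally have km: "k \<le> m ^ d" by (simp add: of_nat_le_iff[symmetric] del: of_nat_le_iff)
  have bound: "real ((m * n ^ (m + 1)) ^ d) \<le> real n powr (6 * real d * r)"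
  proof -
    have "real ((m * n ^ (m + 1)) ^ d) \<le> real (n ^ (3 * m * d))"
      using size_nat_bound[OF n2 m1] by (simp only: of_nat_le_iff)
    also have "\<dots> = real n powr real (3 * m * d)" using n2 by (subst powr_realpow) auto
    also have "\<dots> \<le> real n powr (6 * real d * r)"
    proof (rule powr_mono)
      have "real m \<le> 2 * r" using mr r1 by linarith
      then have "3 * real m * real d \<le> 3 * (2 * r) * real d" by (intro mult_right_mono) auto
      then show "real (3 * m * d) \<le> 6 * real d * r" by (simp add: algebra_simps)
      show "1 \<le> real n" using n2 by simp
    qed
    finally show ?thesis .
  qed
  show ?thesis using main_construct[OF assms(1) m1 assms(2,3) km] bound unfolding r_def
    by (meson order_trans of_nat_le_iff)
qed


theorem corollary3p2:
  shows "\<exists>C::real. C > 0 \<and>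
     (\<forall>n k d::nat. n \<ge> 1 \<longrightarrow> k \<ge> 1 \<longrightarrow> d \<ge> 1 \<longrightarrow>
        (\<exists>F. is_Sigma (d+1) F \<and> invariant n k F \<and> computes_word n k F \<and>
              real (fsize F) \<le> real n powr (C * real d * real k powr (1 / real d))) \<and>
        (\<exists>F. is_Pi (d+1) F \<and> invariant n k F \<and> computes_word n k F \<and>
              real (fsize F) \<le> real n powr (C * real d * real k powr (1 / real d)))) \<and>
     (\<forall>n k::nat. n \<ge> 1 \<longrightarrow> k \<ge> 1 \<longrightarrow>
        (\<exists>F. invariant n k F \<and> computes_word n k F \<and>
              real (fsize F) \<le> real n powr (C * (1 + log 2 (real k))) \<and>
              real (depth F) \<le> C * (1 + log 2 (real k))))"
proof (intro exI[of _ 12] conjI allI impI)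
  show "(0::real) < 12" by simp
next
  fix n k d :: nat assume a: "n \<ge> 1" "k \<ge> 1" "d \<ge> 1"
  have le: "real n powr (6 * real d * real k powr (1 / real d)) \<le> real n powr (12 * real d * real k powr (1 / real d))"
    using a by (intro powr_mono) auto
  from main_real[OF a] le
  show "\<exists>F. is_Sigma (d+1) F \<and> invariant n k F \<and> computes_word n k F \<and>
              real (fsize F) \<le> real n powr (12 * real d * real k powr (1 / real d))"
    by (meson order_trans)
  from main_real[OF a] le
  show "\<exists>F. is_Pi (d+1) F \<and> invariant n k F \<and> computes_word n k F \<and>
              real (fsize F) \<le> real n powr (12 * real d * real k powr (1 / real d))"
    by (meson order_trans)
next
  fix n k :: nat assume a: "n \<ge> 1" "k \<ge> 1"
  define L where "L = log 2 (real k)"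
  have L0: "L \<ge> 0" unfolding L_def using a by simp
  define d where "d = max 1 (nat \<lceil>L\<rceil>)"
  have d1: "d \<ge> 1" unfolding d_def by simp
  have dL: "real d \<ge> L" unfolding d_def by linarith
  have dL2: "real d \<le> 1 + L" unfolding d_def using L0 by linarith
  have r2: "real k powr (1 / real d) \<le> 2"
  proof -
    have "real k = 2 powr L" unfolding L_def using a by simp
    also have "\<dots> \<le> 2 powr real d" using dL by (intro powr_mono) auto
    finally have "real k powr (1 / real d) \<le> (2 powr real d) powr (1 / real d)"
      using a by (intro powr_mono2) auto
    also have "\<dots> = 2" using d1 by (simp add: powr_powr)
    finally show ?thesis .
  qed
  obtain F where F: "is_Sigma (d+1) F" "invariant n k F" "computes_word n k F"
    "real (fsize F) \<le> real n powr (6 * real d * real k powr (1 / real d))"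
    using main_real[OF a d1] by blast
  have "real n powr (6 * real d * real k powr (1 / real d)) \<le> real n powr (12 * (1 + L))"
  proof (rule powr_mono)
    have "6 * real d * real k powr (1 / real d) \<le> 6 * real d * 2"
      using r2 by (intro mult_left_mono) auto
    moreover have "6 * real d * 2 = 12 * real d" by simp
    moreover have "12 * real d \<le> 12 * (1 + L)" using dL2 by simp
    ultimately show "6 * real d * real k powr (1 / real d) \<le> 12 * (1 + L)" by (metis order_trans)
  qed (use a in auto)
  moreover have "real (depth F) \<le> 12 * (1 + L)"
  proof -
    have "depth F \<le> d + 1" using F(1) unfolding is_Sigma_def by simp
    then have "real (depth F) \<le> real d + 1" by linarith
    then show ?thesis using dL2 L0 by argo
  qed
  ultimately show "\<exists>F. invariant n k F \<and> computes_word n k F \<and>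
              real (fsize F) \<le> real n powr (12 * (1 + log 2 (real k))) \<and>
              real (depth F) \<le> 12 * (1 + log 2 (real k))"
    using F unfolding L_def by (meson order_trans)
qed

end
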